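(* Let $\alpha,\beta$ be real (or complex) parameters and let $n,k$ be non-negative integers. Then $$\genfrac{\lfloor}{\rfloor}{0pt}{}{n}{k}^{\alpha,\beta}=\sum_{j=0}^{n-k}(-1)^{j}\,\big((k+1)\beta+n\alpha\,|\,\beta\big)^{\overline{j}}\,\genfrac{\lfloor}{\rfloor}{0pt}{}{n+1}{k+j+1}^{\alpha,\beta},$$ where $(y|\theta)^{\overline{j}}=y(y+\theta)\cdots(y+(j-1)\theta)$ and $(y|\theta)^{\overline{0}}=1$; that is, $\big((k+1)\beta+n\alpha\,|\,\beta\big)^{\overline{j}}=\prod_{i=1}^{j}\big(n\alpha+(k+i)\beta\big)$.
   Context: For parameters $\alpha,\beta$, the generalized Stirling numbers $\genfrac{\lfloor}{\rfloor}{0pt}{}{n}{k}^{\alpha,\beta}$, $0\le k\le n$, are defined by the polynomial identity in $x$ $$x(x+\alpha)\cdots(x+(n-1)\alpha)=\sum_{k=0}^{n}\genfrac{\lfloor}{\rfloor}{0pt}{}{n}{k}^{\alpha,\beta}\,x(x-\beta)\cdots(x-(k-1)\beta),$$ (empty products equal $1$), and $\genfrac{\lfloor}{\rfloor}{0pt}{}{n}{k}^{\alpha,\beta}=0$ for $k<0$ or $k>n$. *)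

theory Defs
  imports Complex_Main
begin

definition gen_rise :: "complex \<Rightarrow> complex \<Rightarrow> nat \<Rightarrow> complex" where
  "gen_rise x a n = (\<Prod>i<n. x + of_nat i * a)"

definition gen_fall :: "complex \<Rightarrow> complex \<Rightarrow> nat \<Rightarrow> complex" where
  "gen_fall x b k = (\<Prod>i<k. x - of_nat i * b)"

definition gstirling :: "complex \<Rightarrow> complex \<Rightarrow> nat \<Rightarrow> nat \<Rightarrow> complex" where
  "gstirling \<alpha> \<beta> n k =
     (if k \<le> n then
        (THE c :: nat \<Rightarrow> complex.
           (\<forall>x. gen_rise x \<alpha> n = (\<Sum>j\<le>n. c j * gen_fall x \<beta> j)) \<and>
           (\<forall>j>n. c j = 0)) k
      else 0)"

end

theory Submission
  imports Defs "HOL-Computational_Algebra.Polynomial"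
begin

fun S :: "complex \<Rightarrow> complex \<Rightarrow> nat \<Rightarrow> nat \<Rightarrow> complex" where
  "S a b 0 k = (if k = 0 then 1 else 0)"
| "S a b (Suc n) k = (case k of 0 \<Rightarrow> 0 | Suc k' \<Rightarrow> S a b n k') + (of_nat n * a + of_nat k * b) * S a b n k"

lemma S_zero: "k > n \<Longrightarrow> S a b n k = 0"
proof (induction n arbitrary: k)
  case 0 then show ?case by simp
next
  case (Suc n)
  then obtain k' where "k = Suc k'" "k' > n" by (cases k) auto
  then show ?case using Suc by simp
qed

lemma fall_Suc: "gen_fall x b (Suc j) = gen_fall x b j * (x - of_nat j * b)"
  by (simp add: gen_fall_def)

lemma rise_Suc: "gen_rise x a (Suc j) = gen_rise x a j * (x + of_nat j * a)"
  by (simp add: gen_rise_def)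

lemma S_expand: "gen_rise x a n = (\<Sum>j\<le>n. S a b n j * gen_fall x b j)"
proof (induction n)
  case 0 then show ?case by (simp add: gen_rise_def gen_fall_def)
next
  case (Suc n)
  have key: "gen_fall x b j * (x + of_nat n * a) = gen_fall x b (Suc j) + (of_nat n * a + of_nat j * b) * gen_fall x b j" for j
    by (simp add: fall_Suc algebra_simps)
  have "gen_rise x a (Suc n) = (\<Sum>j\<le>n. S a b n j * gen_fall x b j) * (x + of_nat n * a)"
    using Suc by (simp add: rise_Suc)
  also have "\<dots> = (\<Sum>j\<le>n. S a b n j * gen_fall x b (Suc j)) + (\<Sum>j\<le>n. (of_nat n * a + of_nat j * b) * S a b n j * gen_fall x b j)"
  proof -
    have "(\<Sum>j\<le>n. S a b n j * gen_fall x b j) * (x + of_nat n * a) = (\<Sum>j\<le>n. S a b n j * (gen_fall x b j * (x + of_nat n * a)))"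
      by (simp add: sum_distrib_right mult.assoc)
    also have "\<dots> = (\<Sum>j\<le>n. S a b n j * gen_fall x b (Suc j) + (of_nat n * a + of_nat j * b) * S a b n j * gen_fall x b j)"
      by (rule sum.cong) (simp, subst key, simp add: algebra_simps)
    finally show ?thesis by (simp add: sum.distrib)
  qed
  also have "(\<Sum>j\<le>n. S a b n j * gen_fall x b (Suc j)) = (\<Sum>j\<le>Suc n. (case j of 0 \<Rightarrow> 0 | Suc k' \<Rightarrow> S a b n k') * gen_fall x b j)"
    by (subst sum.atMost_Suc_shift) simp
  also have "(\<Sum>j\<le>n. (of_nat n * a + of_nat j * b) * S a b n j * gen_fall x b j) = (\<Sum>j\<le>Suc n. (of_nat n * a + of_nat j * b) * S a b n j * gen_fall x b j)"
    by (simp add: S_zero)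
  finally show ?case by (simp add: sum.distrib[symmetric] algebra_simps)
qed

fun fallp :: "complex \<Rightarrow> nat \<Rightarrow> complex poly" where
  "fallp b 0 = 1"
| "fallp b (Suc j) = fallp b j * [:- (of_nat j * b), 1:]"

lemma poly_fallp: "poly (fallp b j) x = gen_fall x b j"
  by (induction j) (simp_all add: gen_fall_def algebra_simps)

lemma fallp_deg: "degree (fallp b j) = j \<and> coeff (fallp b j) j = 1"
proof (induction j)
  case 0 then show ?case by simp
next
  case (Suc j)
  have nz: "fallp b j \<noteq> 0" using Suc by auto
  have l: "[:- (of_nat j * b), 1:] \<noteq> 0" by simp
  have d: "degree (fallp b (Suc j)) = Suc j"
    unfolding fallp.simps degree_mult_eq[OF nz l] using Suc by simp
  moreover have "coeff (fallp b (Suc j)) (Suc j) = 1"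
    using Suc d lead_coeff_mult[of "fallp b j" "[:- (of_nat j * b), 1:]"]
    by (simp only: fallp.simps) simp
  ultimately show ?case by simp
qed

lemma uniq: "(\<forall>x. (\<Sum>j\<le>n. d j * gen_fall x b j) = 0) \<Longrightarrow> j \<le> n \<Longrightarrow> d j = 0"
proof (induction n arbitrary: j)
  case 0
  then show ?case by (simp add: gen_fall_def)
next
  case (Suc n)
  define p where "p = (\<Sum>j\<le>Suc n. smult (d j) (fallp b j))"
  have "poly p x = 0" for x
    using Suc.prems(1) unfolding p_def poly_sum poly_smult poly_fallp by blast
  then have "p = 0" using poly_all_0_iff_0 by auto
  have c: "coeff (fallp b i) (Suc n) = (if i = Suc n then 1 else 0)" if "i \<le> Suc n" for i
  proof (cases "i = Suc n")
    case True then show ?thesis using fallp_deg[of b "Suc n"] by (simp del: fallp.simps)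
  next
    case False
    then have "degree (fallp b i) < Suc n" using that fallp_deg[of b i] by simp
    then show ?thesis using False coeff_eq_0 by auto
  qed
  have "coeff p (Suc n) = d (Suc n)"
  proof -
    have "(\<Sum>j\<le>Suc n. d j * coeff (fallp b j) (Suc n)) = (\<Sum>j\<le>Suc n. d j * (if j = Suc n then 1 else 0))"
      by (rule sum.cong) (simp_all add: c del: fallp.simps)
    also have "\<dots> = d (Suc n)" by (simp add: if_distrib sum.delta cong: if_cong)
    finally show ?thesis unfolding p_def coeff_sum coeff_smult .
  qed
  then have dS: "d (Suc n) = 0" using \<open>p = 0\<close> by simp
  have red: "\<forall>x. (\<Sum>j\<le>n. d j * gen_fall x b j) = 0"
    using Suc.prems(1) dS by simp
  show ?case
  proof (cases "j = Suc n")
    case True then show ?thesis using dS by simp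
  next
    case False then show ?thesis using Suc.IH[OF red] Suc.prems(2) by simp
  qed
qed

lemma gstirling_S: "gstirling a b n k = S a b n k"
proof (cases "k \<le> n")
  case True
  let ?P = "\<lambda>c. (\<forall>x. gen_rise x a n = (\<Sum>j\<le>n. c j * gen_fall x b j)) \<and> (\<forall>j>n. c j = 0)"
  have "(THE c. ?P c) = S a b n"
  proof (rule the_equality)
    show "?P (S a b n)" using S_expand S_zero by blast
  next
    fix c assume h: "?P c"
    have "\<forall>x. (\<Sum>j\<le>n. (c j - S a b n j) * gen_fall x b j) = 0"
      using h S_expand[of _ a n b] by (simp add: algebra_simps sum_subtractf)
    then have "j \<le> n \<Longrightarrow> c j - S a b n j = 0" for j
      using uniq[where n=n and d="\<lambda>j. c j - S a b n j"] by blast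
    then show "c = S a b n" using h S_zero by (metis eq_iff_diff_eq_0 not_le ext)
  qed
  then show ?thesis using True by (simp add: gstirling_def)
next
  case False then show ?thesis by (simp add: gstirling_def S_zero)
qed

lemma tele:
  fixes a b :: complex and n k m :: nat
  defines "P \<equiv> \<lambda>j. (\<Prod>i=1..j. of_nat n * a + of_nat (k+i) * b)"
  shows "(\<Sum>j=0..m. (-1)^j * P j * S a b (Suc n) (k+j+1)) =
     S a b n k - (-1)^(Suc m) * P (Suc m) * S a b n (k + Suc m)"
proof (induction m)
  case 0 then show ?case by (simp add: P_def algebra_simps)
next
  case (Suc m)
  have PS: "P (Suc (Suc m)) = P (Suc m) * (of_nat n * a + of_nat (k + Suc (Suc m)) * b)"
    unfolding P_def by (simp add: prod.nat_ivl_Suc')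
  have "S a b (Suc n) (k + Suc m + 1) = S a b n (k + Suc m) + (of_nat n * a + of_nat (k + Suc (Suc m)) * b) * S a b n (k + Suc (Suc m))"
    by simp
  then show ?case using Suc PS by (simp add: algebra_simps)
qed

theorem theorem4:
  fixes \<alpha> \<beta> :: complex and n k :: nat
  shows "gstirling \<alpha> \<beta> n k =
    (\<Sum>j=0..n-k. (-1)^j * (\<Prod>i=1..j. of_nat n * \<alpha> + of_nat (k+i) * \<beta>)
                 * gstirling \<alpha> \<beta> (n+1) (k+j+1))"
proof (cases "k \<le> n")
  case True
  have "S \<alpha> \<beta> n (k + Suc (n-k)) = 0" using True by (intro S_zero) simp
  then show ?thesis using tele[of n \<alpha> k \<beta> "n-k"] by (simp add: gstirling_S)
next
  case False
  then show ?thesis by (simp add: gstirling_S S_zero)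
qed

end
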